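(* Let $Q=(q_n)_{n\ge1}$ be a basic sequence that is infinite in limit. Then the set $\Theta_Q$ is nowhere dense.
   Context: A basic sequence is a sequence $Q=(q_n)_{n\ge1}$ of integers with $q_n\ge 2$; it is infinite in limit if $q_n\to\infty$. $\mathbb{N}$ denotes the positive integers. For each positive integer $j$ let $\nu_j=\min\{N : q_m\ge 2j^2 \text{ for all } m\ge N\}$. Define $l_1=\max(\nu_2-1,1)$ and, recursively for $i\ge 2$, $l_i=\max\big(\min\{k\in\mathbb{N} : l_1+2l_2+\cdots+(i-1)l_{i-1}+ik\ge \nu_{i+1}-1\},1\big)$. Put $L_i=\sum_{j=1}^i jl_j$ (with $L_0=0$). Let $S_Q=\{(a,b,c)\in\mathbb{N}^3 : b\le l_a,\ c\le a\}$ and $\phi_Q(a,b,c)=L_{a-1}+(b-1)a+c$; $\phi_Q$ is a bijection $S_Q\to\mathbb{N}$. A $Q$-special sequence is a family of integers $F=(F_{(a,b,c)})_{(a,b,c)\in S_Q}$ with $F_{(a,b,1)}=0$ for all $(a,b,1)\in S_Q$ and $\frac{F_{(a,b,c)}}{q_{\phi_Q(a,b,c)}}\in\left[\frac{c-1}{a}-\frac{1}{2a^2},\frac{c-1}{a}+\frac{1}{2a^2}\right]$ for $(a,b,c)\in S_Q$ with $c>1$. Let $\Gamma_Q$ be the set of $Q$-special sequences. For $F\in\Gamma_Q$ put $E_{F,n}=F_{\phi_Q^{-1}(n)}$ and $x_F=\sum_{n=1}^\infty \frac{E_{F,n}}{q_1q_2\cdots q_n}$. Define $\Theta_Q=\{x_F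 : F\in\Gamma_Q\}\subseteq[0,1)$. *)

theory Defs
  imports "HOL-Analysis.Analysis"
begin

text \<open>A sequence Q = (q_n)_{n>=1} is represented as q :: nat => int; the value q 0 is ignored.\<close>

definition basic_seq :: "(nat \<Rightarrow> int) \<Rightarrow> bool" where
  "basic_seq q \<longleftrightarrow> (\<forall>n\<ge>1. q n \<ge> 2)"

definition infinite_in_limit :: "(nat \<Rightarrow> int) \<Rightarrow> bool" where
  "infinite_in_limit q \<longleftrightarrow> filterlim q at_top sequentially"

definition nuQ :: "(nat \<Rightarrow> int) \<Rightarrow> nat \<Rightarrow> nat" where
  "nuQ q j = (LEAST N. N \<ge> 1 \<and> (\<forall>m\<ge>N. q m \<ge> 2 * (int j)^2))"

definition lstep :: "(nat \<Rightarrow> int) \<Rightarrow> nat \<Rightarrow> nat \<Rightarrow> nat" where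
  "lstep q i Lprev =
     (if i = 1 then max (nuQ q 2 - 1) 1
      else max (LEAST k. k \<ge> 1 \<and> Lprev + i * k \<ge> nuQ q (i+1) - 1) 1)"

fun LQ :: "(nat \<Rightarrow> int) \<Rightarrow> nat \<Rightarrow> nat" where
  "LQ q 0 = 0"
| "LQ q (Suc i) = LQ q i + Suc i * lstep q (Suc i) (LQ q i)"

definition lQ :: "(nat \<Rightarrow> int) \<Rightarrow> nat \<Rightarrow> nat" where
  "lQ q i = lstep q i (LQ q (i - 1))"

definition SQ :: "(nat \<Rightarrow> int) \<Rightarrow> (nat \<times> nat \<times> nat) set" where
  "SQ q = {(a, b, c). a \<ge> 1 \<and> b \<ge> 1 \<and> c \<ge> 1 \<and> b \<le> lQ q a \<and> c \<le> a}"

definition phiQ :: "(nat \<Rightarrow> int) \<Rightarrow> nat \<times> nat \<times> nat \<Rightarrow> nat" where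
  "phiQ q = (\<lambda>(a, b, c). LQ q (a - 1) + (b - 1) * a + c)"

text \<open>Q-special sequences: integer families indexed by S_Q (values outside S_Q are irrelevant).\<close>
definition special_seq :: "(nat \<Rightarrow> int) \<Rightarrow> (nat \<times> nat \<times> nat \<Rightarrow> int) \<Rightarrow> bool" where
  "special_seq q F \<longleftrightarrow>
     (\<forall>a b. (a, b, 1) \<in> SQ q \<longrightarrow> F (a, b, 1) = 0) \<and>
     (\<forall>a b c. (a, b, c) \<in> SQ q \<and> c > 1 \<longrightarrow>
        real_of_int (F (a, b, c)) / real_of_int (q (phiQ q (a, b, c)))
          \<in> {(real c - 1) / real a - 1 / (2 * (real a)^2) ..
             (real c - 1) / real a + 1 / (2 * (real a)^2)})"

definition GammaQ :: "(nat \<Rightarrow> int) \<Rightarrow> (nat \<times> nat \<times> nat \<Rightarrow> int) set" where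
  "GammaQ q = {F. special_seq q F}"

definition EQ :: "(nat \<Rightarrow> int) \<Rightarrow> (nat \<times> nat \<times> nat \<Rightarrow> int) \<Rightarrow> nat \<Rightarrow> int" where
  "EQ q F n = F (the_inv_into (SQ q) (phiQ q) n)"

definition xQ :: "(nat \<Rightarrow> int) \<Rightarrow> (nat \<times> nat \<times> nat \<Rightarrow> int) \<Rightarrow> real" where
  "xQ q F = (\<Sum>n. real_of_int (EQ q F (Suc n)) / (\<Prod>k=1..Suc n. real_of_int (q k)))"

definition ThetaQ :: "(nat \<Rightarrow> int) \<Rightarrow> real set" where
  "ThetaQ q = xQ q ` GammaQ q"

definition nowhere_dense :: "real set \<Rightarrow> bool" where
  "nowhere_dense A \<longleftrightarrow> interior (closure A) = {}"

end

theory Submission imports Defs begin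

lemma lstep_ge1: "lstep q i L \<ge> 1" unfolding lstep_def by auto
lemma lQ_ge1: "lQ q a \<ge> 1" unfolding lQ_def by (rule lstep_ge1)
lemma LQ_Suc': "LQ q (Suc i) = LQ q i + Suc i * lQ q (Suc i)" by (simp add: lQ_def)
declare LQ.simps(2)[simp del]
lemma LQ_less_Suc: "LQ q i < LQ q (Suc i)"
  using lQ_ge1[of q "Suc i"] by (simp add: LQ_Suc')
lemma LQ_smono: "strict_mono (LQ q)"
  using LQ_less_Suc by (simp add: strict_mono_Suc_iff)
lemma LQ_ge: "LQ q a \<ge> a"
  by (induction a) (auto simp: Suc_le_eq intro: le_less_trans[OF _ LQ_less_Suc])

lemma LQ_pos_eq: "a \<ge> 1 \<Longrightarrow> LQ q a = LQ q (a - 1) + a * lQ q a"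
  by (cases a) (auto simp: LQ_Suc')

lemma phi_range:
  assumes "(a,b,c) \<in> SQ q"
  shows "LQ q (a - 1) < phiQ q (a,b,c) \<and> phiQ q (a,b,c) \<le> LQ q a"
proof -
  from assms have a: "a \<ge> 1" "b \<ge> 1" "c \<ge> 1" "b \<le> lQ q a" "c \<le> a" by (auto simp: SQ_def)
  have "(b-1)*a \<le> (lQ q a - 1) * a" using a by (intro mult_le_mono1) auto
  moreover have "(lQ q a - 1) * a + a = a * lQ q a" using lQ_ge1[of q a]
    by (metis Suc_diff_le diff_Suc_1 mult.commute mult_Suc_right add.commute)
  ultimately have "(b-1)*a + c \<le> a * lQ q a" using a by linarith
  then show ?thesis using a LQ_pos_eq[of a q] by (simp add: phiQ_def)
qed

lemma phi_inj: "inj_on (phiQ q) (SQ q)"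
proof (rule inj_onI)
  fix x y assume x: "x \<in> SQ q" and y: "y \<in> SQ q" and eq: "phiQ q x = phiQ q y"
  obtain a b c where xd: "x = (a,b,c)" by (cases x) auto
  obtain a' b' c' where yd: "y = (a',b',c')" by (cases y) auto
  have r1: "LQ q (a - 1) < phiQ q x \<and> phiQ q x \<le> LQ q a" using phi_range x xd by blast
  have r2: "LQ q (a' - 1) < phiQ q y \<and> phiQ q y \<le> LQ q a'" using phi_range y yd by blast
  from x y xd yd have a: "a \<ge> 1" "b \<ge> 1" "c \<ge> 1" "c \<le> a" "a' \<ge> 1" "b' \<ge> 1" "c' \<ge> 1" "c' \<le> a'"
    by (auto simp: SQ_def)
  have aa: "a = a'"
  proof (rule ccontr)
    assume "a \<noteq> a'"
    then have "a < a' \<or> a' < a" by auto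
    then show False
    proof
      assume "a < a'" then have "a \<le> a' - 1" by simp
      then have "LQ q a \<le> LQ q (a' - 1)" using LQ_smono[of q] by (simp add: strict_mono_less_eq)
      then show False using r1 r2 eq by linarith
    next
      assume "a' < a" then have "a' \<le> a - 1" by simp
      then have "LQ q a' \<le> LQ q (a - 1)" using LQ_smono[of q] by (simp add: strict_mono_less_eq)
      then show False using r1 r2 eq by linarith
    qed
  qed
  have e2: "(b-1)*a + c = (b'-1)*a + c'" using eq aa by (simp add: xd yd phiQ_def)
  have bb: "b = b'"
  proof (rule ccontr)
    assume "b \<noteq> b'"
    then have "b < b' \<or> b' < b" by auto
    then show False
    proof
      assume "b < b'" then have "b \<le> b' - 1" by simp
      then have "b * a \<le> (b'-1)*a" by (intro mult_le_mono1)
      moreover have "(b-1)*a + a = b * a" using a by (metis Suc_diff_le diff_Suc_1 mult_Suc add.commute)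
      ultimately show False using e2 a aa by linarith
    next
      assume "b' < b" then have "b' \<le> b - 1" by simp
      then have "b' * a \<le> (b-1)*a" by (intro mult_le_mono1)
      moreover have "(b'-1)*a + a = b' * a" using a by (metis Suc_diff_le diff_Suc_1 mult_Suc add.commute)
      ultimately show False using e2 a aa by linarith
    qed
  qed
  show "x = y" using e2 aa bb xd yd by simp
qed

lemma phi_surj_aux: "\<forall>n. 1 \<le> n \<and> n \<le> LQ q a \<longrightarrow> n \<in> phiQ q ` SQ q"
proof (induction a)
  case 0 then show ?case by simp
next
  case (Suc a)
  show ?case
  proof (intro allI impI)
    fix n assume n: "1 \<le> n \<and> n \<le> LQ q (Suc a)"
    show "n \<in> phiQ q ` SQ q"
    proof (cases "n \<le> LQ q a")
      case True then show ?thesis using Suc n by blast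
    next
      case False
      define A where "A = Suc a"
      define r where "r = n - LQ q a - 1"
      have nr: "n = LQ q a + r + 1" using False r_def by simp
      have "r < A * lQ q A" using n nr by (simp add: LQ_Suc' A_def)
      then have rd: "r div A < lQ q A" using less_mult_imp_div_less[of r "lQ q A" A] by (simp add: mult.commute)
      define b where "b = r div A + 1"
      define c where "c = r mod A + 1"
      have "c \<le> A" using c_def A_def by (simp add: Suc_leI)
      then have "(A,b,c) \<in> SQ q" using rd by (auto simp: SQ_def A_def b_def c_def)
      moreover have "phiQ q (A,b,c) = n"
      proof -
        have A1: "A - 1 = a" by (simp add: A_def)
        have dm: "(r div A) * A + r mod A = r" by (rule div_mult_mod_eq)
        have "phiQ q (A,b,c) = LQ q (A - 1) + (b - 1) * A + c" by (simp add: phiQ_def)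
        also have "\<dots> = LQ q a + ((r div A) * A + r mod A) + 1" unfolding A1 b_def c_def by simp
        finally show ?thesis using dm nr by simp
      qed
      ultimately show ?thesis by (metis image_eqI)
    qed
  qed
qed

lemma phi_surj: "n \<ge> 1 \<Longrightarrow> n \<in> phiQ q ` SQ q"
  using phi_surj_aux[of q n] LQ_ge[where q=q and a=n] by blast


lemma EQ_phi: "x \<in> SQ q \<Longrightarrow> EQ q F (phiQ q x) = F x"
  unfolding EQ_def by (simp add: the_inv_into_f_f[OF phi_inj])

lemma digit_zero:
  assumes "F \<in> GammaQ q" "a \<ge> 1"
  shows "EQ q F (LQ q (a - 1) + 1) = 0"
proof -
  have s: "(a,1,1) \<in> SQ q" using assms(2) lQ_ge1[of q a] by (simp add: SQ_def)
  have "phiQ q (a,1,1) = LQ q (a - 1) + 1" by (simp add: phiQ_def)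
  then have "EQ q F (LQ q (a - 1) + 1) = F (a,1,1)" using EQ_phi[OF s] by simp
  also have "\<dots> = 0" using assms(1) s by (simp add: GammaQ_def special_seq_def)
  finally show ?thesis .
qed

lemma digit_bounds:
  assumes bq: "basic_seq q" and F: "F \<in> GammaQ q" and n: "n \<ge> 1"
  shows "0 \<le> EQ q F n \<and> EQ q F n \<le> q n - 1"
proof -
  obtain x where x: "x \<in> SQ q" "phiQ q x = n" using phi_surj[OF n, of q] by (auto simp: image_iff)
  obtain a b c where xd: "x = (a,b,c)" by (cases x) auto
  have E: "EQ q F n = F (a,b,c)" using EQ_phi[OF x(1)] x(2) xd by simp
  have qn: "q n \<ge> 2" using bq n by (simp add: basic_seq_def)
  have a: "a \<ge> 1" "c \<ge> 1" "c \<le> a" using x xd by (auto simp: SQ_def)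
  show ?thesis
  proof (cases "c = 1")
    case True
    then have "F (a,b,c) = 0" using F x xd by (simp add: GammaQ_def special_seq_def)
    then show ?thesis using E qn by simp
  next
    case False
    then have c: "c > 1" using a by simp
    have mem: "real_of_int (F (a, b, c)) / real_of_int (q n)
          \<in> {(real c - 1) / real a - 1 / (2 * (real a)^2) ..
             (real c - 1) / real a + 1 / (2 * (real a)^2)}"
      using F x xd c by (auto simp: GammaQ_def special_seq_def)
    define ar where "ar = real a"
    define cr where "cr = real c"
    have ar2: "ar \<ge> 2" using a c unfolding ar_def by simp
    have cr: "cr \<ge> 2" "cr \<le> ar" using a c unfolding ar_def cr_def by auto
    have t: "1 / (2 * ar^2) < 1 / ar" using ar2
      by (simp add: divide_simps power2_eq_square)
    have l1: "1 / ar \<le> (cr - 1) / ar" using cr ar2 by (simp add: divide_simps)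
    have l3: "(cr - 1) / ar \<le> (ar - 1) / ar" using cr ar2 by (simp add: divide_simps)
    define Fr where "Fr = real_of_int (F (a,b,c))"
    define qr where "qr = real_of_int (q n)"
    have qr: "qr > 0" using qn unfolding qr_def by simp
    have lo: "Fr / qr > 0" using mem t l1 unfolding Fr_def qr_def ar_def cr_def by auto
    have "(ar - 1) / ar = 1 - 1/ar" using ar2 by (simp add: divide_simps)
    then have hi: "Fr / qr < 1" using mem t l3 unfolding Fr_def qr_def ar_def cr_def by auto
    have "Fr > 0" using lo qr by (simp add: zero_less_divide_iff)
    moreover have "Fr < qr" using hi qr by (simp add: divide_less_eq)
    ultimately have "0 < F (a,b,c)" "F (a,b,c) < q n" unfolding Fr_def qr_def by auto
    then show ?thesis using E by simp
  qed
qed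


definition PP :: "(nat \<Rightarrow> int) \<Rightarrow> nat \<Rightarrow> real" where
  "PP q i = (\<Prod>k=1..i. real_of_int (q k))"

lemma PP_0: "PP q 0 = 1" by (simp add: PP_def)
lemma PP_Suc: "PP q (Suc i) = PP q i * real_of_int (q (Suc i))"
  unfolding PP_def by (subst prod.nat_ivl_Suc') (auto simp: mult.commute)

lemma PP_ge: assumes "basic_seq q" shows "PP q i \<ge> 2^i"
proof (induction i)
  case 0 then show ?case by (simp add: PP_0)
next
  case (Suc i)
  have "q (Suc i) \<ge> 2" using assms by (simp add: basic_seq_def)
  then have "real_of_int (q (Suc i)) \<ge> 2" by simp
  then have "PP q i * real_of_int (q (Suc i)) \<ge> 2^i * 2"
    using Suc order_trans[OF zero_le_power[of "2::real" i] Suc.IH] by (intro mult_mono) auto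
  then show ?case by (simp add: PP_Suc mult.commute)
qed

lemma PP_pos: "basic_seq q \<Longrightarrow> PP q i > 0"
  using PP_ge[of q i] by (smt (verit) zero_less_power)

lemma tail_partial:
  fixes d g :: "nat \<Rightarrow> real"
  assumes "\<And>i. d i \<le> g i - g (Suc i)"
  shows "(\<Sum>i<N. d (i + m)) \<le> g m - g (m + N)"
proof (induction N)
  case 0 then show ?case by simp
next
  case (Suc N)
  have "d (N + m) \<le> g (m + N) - g (m + Suc N)" using assms[of "N+m"] by (simp add: add.commute)
  then show ?case using Suc by simp
qed

lemma tail_bound:
  fixes d g :: "nat \<Rightarrow> real"
  assumes d0: "\<And>i. 0 \<le> d i" and dg: "\<And>i. d i \<le> g i - g (Suc i)" and g0: "\<And>i. 0 \<le> g i"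
  shows "summable (\<lambda>i. d (i + m))" "(\<Sum>i. d (i + m)) \<le> g m"
proof -
  have b: "(\<Sum>i<N. d (i + m)) \<le> g m" for N
    using tail_partial[where d=d and g=g, OF dg, where N=N and m=m] g0[of "m+N"] by linarith
  show s: "summable (\<lambda>i. d (i + m))"
    by (rule summableI_nonneg_bounded[where x="g m"]) (use d0 b in auto)
  show "(\<Sum>i. d (i + m)) \<le> g m" by (rule suminf_le_const[OF s b])
qed

lemma gap:
  assumes bq: "basic_seq q" and F: "F \<in> GammaQ q" and a: "a \<ge> 1"
  defines "m \<equiv> LQ q (a - 1)"
  shows "\<exists>K::int. 0 \<le> xQ q F * PP q m - K \<and> xQ q F * PP q m - K \<le> 1 / real_of_int (q (Suc m))"
proof -
  define d where "d i = real_of_int (EQ q F (Suc i)) / PP q (Suc i)" for i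
  define g where "g i = 1 / PP q i" for i
  have x: "xQ q F = suminf d" unfolding xQ_def d_def PP_def by simp
  have Pp: "\<And>i. PP q i > 0" using PP_pos[OF bq] by blast
  have d0: "0 \<le> d i" for i
    using digit_bounds[OF bq F, of "Suc i"] Pp[of "Suc i"] by (simp add: d_def)
  have dg: "d i \<le> g i - g (Suc i)" for i
  proof -
    define p where "p = PP q i"
    define Q where "Q = real_of_int (q (Suc i))"
    have p: "p > 0" using Pp p_def by simp
    have Q: "Q \<ge> 2" using bq by (simp add: basic_seq_def Q_def)
    have E: "real_of_int (EQ q F (Suc i)) \<le> Q - 1"
      using digit_bounds[OF bq F, of "Suc i"] by (simp add: Q_def)
    have "d i = real_of_int (EQ q F (Suc i)) / (p * Q)" by (simp add: d_def PP_Suc p_def Q_def)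
    also have "\<dots> \<le> (Q - 1) / (p * Q)" using E p Q by (simp add: divide_right_mono)
    also have "\<dots> = 1 / p - 1 / (p * Q)" using p Q by (simp add: field_simps)
    also have "\<dots> = g i - g (Suc i)" by (simp add: g_def PP_Suc p_def Q_def)
    finally show ?thesis .
  qed
  have g0: "0 \<le> g i" for i using Pp[of i] by (simp add: g_def)
  have sd: "summable d" using tail_bound(1)[where d=d and g=g, OF d0 dg g0, of 0] by simp
  have int: "(\<Sum>i<n. d i) * PP q n \<in> \<int>" for n
  proof (induction n)
    case 0 then show ?case by simp
  next
    case (Suc n)
    have "(\<Sum>i<Suc n. d i) * PP q (Suc n)
        = ((\<Sum>i<n. d i) * PP q n) * real_of_int (q (Suc n)) + real_of_int (EQ q F (Suc n))"
    proof -
      have "q (Suc n) \<ge> 2" using bq by (simp add: basic_seq_def)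
      then show ?thesis using Pp[of n] by (simp add: PP_Suc d_def algebra_simps)
    qed
    then show ?case using Suc by (simp add: Ints_mult Ints_add Ints_of_int)
  qed
  then obtain K where K: "(\<Sum>i<m. d i) * PP q m = real_of_int K" using Ints_cases by metis
  define T where "T = (\<Sum>i. d (i + m))"
  have split: "suminf d = T + (\<Sum>i<m. d i)" unfolding T_def by (rule suminf_split_initial_segment[OF sd])
  have dm: "d m = 0" using digit_zero[OF F a] by (simp add: d_def m_def)
  have sT: "summable (\<lambda>i. d (i + m))" by (rule tail_bound(1)[where d=d and g=g, OF d0 dg g0])
  have "(\<Sum>i. d (Suc i + m)) = T - d (0 + m)"
    unfolding T_def using suminf_split_head[OF sT] by simp
  then have T1: "T = (\<Sum>i. d (i + Suc m))" using dm by simp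
  have Tle: "T \<le> g (Suc m)" unfolding T1 by (rule tail_bound(2)[where d=d and g=g, OF d0 dg g0])
  have T0: "T \<ge> 0" unfolding T_def using sT d0 by (simp add: suminf_nonneg)
  have xe: "xQ q F * PP q m - K = T * PP q m" using x split K by (simp add: algebra_simps)
  have "T * PP q m \<le> g (Suc m) * PP q m" using Tle Pp[of m] by (simp add: mult_right_mono)
  also have "\<dots> = 1 / real_of_int (q (Suc m))" using Pp[of m] by (simp add: g_def PP_Suc)
  finally have "T * PP q m \<le> 1 / real_of_int (q (Suc m))" .
  moreover have "0 \<le> T * PP q m" using T0 Pp[of m] by simp
  ultimately show ?thesis using xe by metis
qed


theorem mainTheorem4:
  fixes q :: "nat \<Rightarrow> int"
  assumes "basic_seq q" and "infinite_in_limit q"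
  shows "nowhere_dense (ThetaQ q)"
proof -
  have bq: "basic_seq q" using assms(1) .
  have "y \<notin> interior (closure (ThetaQ q))" for y
  proof
    assume y: "y \<in> interior (closure (ThetaQ q))"
    obtain e where e: "e > 0" "ball y e \<subseteq> closure (ThetaQ q)" using y mem_interior by blast
    obtain n :: nat where n: "1/e < real n" using reals_Archimedean2 by blast
    define m where "m = LQ q n"
    have mn: "m \<ge> n" unfolding m_def by (rule LQ_ge)
    define P where "P = PP q m"
    have P2: "P \<ge> 2^m" unfolding P_def by (rule PP_ge[OF bq])
    have "m < (2::nat)^m" by (rule less_exp)
    then have "real m < 2^m" by (metis of_nat_less_iff of_nat_numeral of_nat_power)
    then have Pgt: "P > 1/e" using P2 mn n by linarith
    have Ppos: "P > 0" unfolding P_def by (rule PP_pos[OF bq])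
    have Pe: "P * e > 1" using Pgt e(1) by (simp add: field_simps)
    define Qr where "Qr = real_of_int (q (Suc m))"
    have Qr: "Qr \<ge> 2" using bq by (simp add: basic_seq_def Qr_def)
    define k where "k = \<lfloor>(y - e) * P\<rfloor> + 1"
    define s where "s = (real_of_int k + 1/Qr) / P"
    define t where "t = (real_of_int k + 1) / P"
    have k1: "real_of_int k > (y - e) * P" unfolding k_def by linarith
    have k2: "real_of_int k \<le> (y - e) * P + 1" unfolding k_def by linarith
    have iQ: "0 < 1/Qr" "1/Qr < 1" using Qr by auto
    have "real_of_int k / P > y - e" using k1 Ppos by (simp add: field_simps)
    moreover have "real_of_int k / P < s" unfolding s_def using iQ Ppos by (simp add: divide_strict_right_mono)
    ultimately have s1: "y - e < s" by linarith
    have st: "s < t" unfolding s_def t_def using iQ Ppos by (simp add: divide_strict_right_mono)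
    have "t \<le> ((y - e) * P + 2) / P" unfolding t_def using k2 Ppos by (simp add: divide_right_mono)
    also have "\<dots> = y - e + 2 / P" using Ppos by (simp add: field_simps)
    also have "2 / P < 2 * e" using Pe Ppos e(1) by (simp add: field_simps)
    finally have t1: "t < y + e" by linarith
    have Ssub: "{s<..<t} \<subseteq> ball y e"
    proof
      fix z assume "z \<in> {s<..<t}"
      then have "y - e < z" "z < y + e" using s1 t1 by auto
      then show "z \<in> ball y e" by (simp add: dist_real_def abs_if mem_ball)
    qed
    have ne: "{s<..<t} \<noteq> {}" using st by auto
    have "{s<..<t} \<inter> closure (ThetaQ q) \<noteq> {}" using Ssub e(2) ne by blast
    then have "{s<..<t} \<inter> ThetaQ q \<noteq> {}" using open_Int_closure_eq_empty[of "{s<..<t}"] by auto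
    then obtain F where F: "F \<in> GammaQ q" and xs: "xQ q F \<in> {s<..<t}"
      unfolding ThetaQ_def by blast
    obtain K :: int where K: "0 \<le> xQ q F * P - K" "xQ q F * P - K \<le> 1 / Qr"
      using gap[OF bq F, of "Suc n"] by (auto simp: m_def P_def Qr_def)
    have x1: "xQ q F * P > real_of_int k + 1/Qr" using xs Ppos by (simp add: s_def field_simps)
    have x2: "xQ q F * P < real_of_int k + 1" using xs Ppos by (simp add: t_def field_simps)
    have "real_of_int K > real_of_int k" using x1 K by linarith
    then have "K > k" by simp
    moreover have "real_of_int K < real_of_int (k + 1)" using x2 K by simp
    then have "K < k + 1" by (simp only: of_int_less_iff)
    ultimately have "k < K" "K < k + 1" by blast+
    then show False by linarith
  qed
  then show ?thesis unfolding nowhere_dense_def by blast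
qed

end
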